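(* Consider the following $n$-round process. In each round $i$, an adversary chooses $p_i\in[0,1]$, possibly depending on the outcomes of the first $i-1$ rounds, and then a coin with heads probability $p_i$ is tossed. Let $Z_i$ be the indicator of the event that no coin comes up heads in the first $i$ rounds (rounds $1,\dots,i$), and let $Y=\sum_{i=1}^n p_iZ_i$. Then for every real $q$ and every adversary strategy, $\Pr[Y>q]\le\exp(-q)$. *)

theory Defs
  imports "HOL-Probability.Probability"
begin

text \<open>An adversary strategy maps the history of previous coin outcomes
(a list in chronological order, True = heads) to the heads probability of
the next coin.\<close>

fun coin_process :: "(bool list \<Rightarrow> real) \<Rightarrow> nat \<Rightarrow> bool list pmf" where
  "coin_process s 0 = return_pmf []"
| "coin_process s (Suc n) =
     bind_pmf (coin_process s n) (\<lambda>h.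
       bind_pmf (bernoulli_pmf (s h)) (\<lambda>c. return_pmf (h @ [c])))"

text \<open>Round i+1 (0-indexed i): probability p = s (take i h);
Z = indicator that no heads among the first i+1 outcomes.\<close>

definition Z_ind :: "bool list \<Rightarrow> nat \<Rightarrow> real" where
  "Z_ind h i = (if True \<notin> set (take (Suc i) h) then 1 else 0)"

definition Y_val :: "(bool list \<Rightarrow> real) \<Rightarrow> nat \<Rightarrow> bool list \<Rightarrow> real" where
  "Y_val s n h = (\<Sum>i<n. s (take i h) * Z_ind h i)"

end

theory Submission imports Defs begin

lemma prob_bind_bern:
  assumes "0 \<le> p" "p \<le> 1"
  shows "measure_pmf.prob (bind_pmf (bernoulli_pmf p) f) A
        = p * measure_pmf.prob (f True) A + (1 - p) * measure_pmf.prob (f False) A"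
proof -
  have "ennreal (measure_pmf.prob (bind_pmf (bernoulli_pmf p) f) A)
     = emeasure (measure_pmf (bind_pmf (bernoulli_pmf p) f)) A"
    by (simp add: measure_pmf.emeasure_eq_measure)
  also have "\<dots> = emeasure (f True) A * ennreal p + emeasure (f False) A * ennreal (1 - p)"
    using assms by simp
  also have "\<dots> = ennreal (p * measure_pmf.prob (f True) A + (1 - p) * measure_pmf.prob (f False) A)"
    using assms by (simp add: measure_pmf.emeasure_eq_measure ennreal_mult' ennreal_plus mult.commute)
  finally have e: "ennreal (measure_pmf.prob (bind_pmf (bernoulli_pmf p) f) A)
     = ennreal (p * measure_pmf.prob (f True) A + (1 - p) * measure_pmf.prob (f False) A)"
    using assms by (subst ennreal_plus) simp_all
  show ?thesis using e assms by (subst (asm) ennreal_inj) simp_all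
qed

lemma cp_front:
  "coin_process s (Suc n) = bind_pmf (bernoulli_pmf (s []))
     (\<lambda>c. map_pmf (Cons c) (coin_process (\<lambda>h. s (c # h)) n))"
proof (induction n arbitrary: s)
  case 0
  then show ?case by (simp add: bind_return_pmf)
next
  case (Suc n)
  show ?case
    apply (subst coin_process.simps(2))
    apply (subst Suc)
    apply (simp add: bind_assoc_pmf bind_map_pmf map_bind_pmf)
    done
qed

lemma Y_cons:
  "Y_val s (Suc n) (c # h) = (if c then 0 else s [] + Y_val (\<lambda>h. s (False # h)) n h)"
proof -
  have "Y_val s (Suc n) (c # h) = s [] * Z_ind (c # h) 0 + (\<Sum>j<n. s (c # take j h) * Z_ind (c#h) (Suc j))"
    unfolding Y_val_def by (simp only: sum.lessThan_Suc_shift) simp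
  also have "\<dots> = (if c then 0 else s [] + Y_val (\<lambda>h. s (False # h)) n h)"
    by (cases c) (simp_all add: Z_ind_def Y_val_def)
  finally show ?thesis .
qed

theorem mainTheorem14:
  fixes s :: "bool list \<Rightarrow> real" and n :: nat and q :: real
  assumes "\<And>h. 0 \<le> s h \<and> s h \<le> 1"
  shows "measure_pmf.prob (coin_process s n) {h. Y_val s n h > q} \<le> exp (- q)"
  using assms
proof (induction n arbitrary: s q)
  case 0
  show ?case
  proof (cases "q < 0")
    case True
    have "measure_pmf.prob (coin_process s 0) {h. Y_val s 0 h > q} \<le> 1" by simp
    also have "1 \<le> exp (-q)" using True by simp
    finally show ?thesis .
  next
    case False
    then show ?thesis by (simp add: Y_val_def)
  qed
next
  case (Suc n)
  define p where "p = s []"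
  have p: "0 \<le> p" "p \<le> 1" using Suc.prems p_def by auto
  define sF where "sF = (\<lambda>h. s (False # h))"
  have sF: "\<And>h. 0 \<le> sF h \<and> sF h \<le> 1" using Suc.prems sF_def by auto
  show ?case
  proof (cases "q < 0")
    case True
    have "measure_pmf.prob (coin_process s (Suc n)) {h. Y_val s (Suc n) h > q} \<le> 1" by simp
    also have "1 \<le> exp (-q)" using True by simp
    finally show ?thesis .
  next
    case False
    have "measure_pmf.prob (coin_process s (Suc n)) {h. Y_val s (Suc n) h > q}
        = (1 - p) * measure_pmf.prob (coin_process sF n) {h. Y_val sF n h > q - p}"
      using False p unfolding cp_front
      by (simp add: prob_bind_bern p_def[symmetric] vimage_def Y_cons sF_def[symmetric] algebra_simps)
    also have "\<dots> \<le> (1 - p) * exp (p - q)"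
      using Suc.IH[of sF "q - p", OF sF] p by (intro mult_left_mono) auto
    also have "\<dots> \<le> exp (- p) * exp (p - q)"
      using exp_ge_add_one_self[of "-p"] p by (intro mult_right_mono) auto
    also have "\<dots> = exp (- q)" by (simp add: exp_add[symmetric])
    finally show ?thesis .
  qed
qed

end
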